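(* Consider offline data $\{(s_h^k,a_h^k,r_h^k)\}_{h\in[H]}^{k\in[K]}$ from a behavior policy $\mu$ in a linear MDP, with $\Sigma_h^k=\sum_{t=1}^{k-1}\phi_h(s_h^t,a_h^t)\phi_h(s_h^t,a_h^t)^T+I$. Assume there exists an optimal policy $\pi^*$ with $d^{\pi^*}_h(s,a)>0\implies d^\mu_h(s,a)>0$ for all $(h,s,a)$, and that $\kappa_h^{-1}:=\inf_{(s,a):d^\mu_h(s,a)>0}d^\mu_h(s,a)>0$ for all $h$. Then for any $h\in[H]$, \[ \sum_{k=1}^K\frac{d^*_h(s_h^k,a_h^k)}{d^\mu_h(s_h^k,a_h^k)}\|\phi_h(s_h^k,a_h^k)\|_{(\Sigma_h^k)^{-1}}\le\kappa_h\sqrt{2Kd\log(1+K/d)}, \] where $d^*_h=d^{\pi^*}_h$.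
   Context: Episodic MDP with horizon $H$; $d^\pi_h(s,a)$ is the state-action visitation density at step $h$ under policy $\pi$, assumed $\le1$. Linear MDP: known features $\phi_h:\mathcal{S}\times\mathcal{A}\to\mathbb{R}^d$ with $\|\phi_h(s,a)\|_2\le1$ (rewards and transitions linear in $\phi_h$). $\|x\|_A=\sqrt{x^TAx}$. *)

theory Defs
  imports "HOL-Analysis.Analysis"
begin

definition outer :: "real^'d \<Rightarrow> real^'d^'d" where
  "outer x = (\<chi> i j. x $ i * x $ j)"

definition Sigma ::
  "(nat \<Rightarrow> 's \<Rightarrow> 'a \<Rightarrow> real^'d) \<Rightarrow> (nat \<Rightarrow> nat \<Rightarrow> 's) \<Rightarrow> (nat \<Rightarrow> nat \<Rightarrow> 'a)
   \<Rightarrow> nat \<Rightarrow> nat \<Rightarrow> real^'d^'d" where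
  "Sigma \<phi> s a h k = (\<Sum>t\<in>{1..<k}. outer (\<phi> h (s h t) (a h t))) + mat 1"

definition wnorm :: "real^'d \<Rightarrow> real^'d^'d \<Rightarrow> real" where
  "wnorm x A = sqrt (x \<bullet> (A *v x))"

definition kappa :: "(nat \<Rightarrow> 's \<Rightarrow> 'a \<Rightarrow> real) \<Rightarrow> nat \<Rightarrow> real" where
  "kappa dmu h = 1 / Inf {dmu h x y | x y. dmu h x y > 0}"

end

theory Submission
  imports Defs
begin



definition rowrep :: "real^'n^'n \<Rightarrow> 'n \<Rightarrow> real^'n \<Rightarrow> real^'n^'n" where
  "rowrep A i x = (\<chi> k. if k = i then x else row k A)"

lemma det_id_row: fixes i :: "'n::finite" and y :: "real^'n" shows "det (rowrep (mat 1) i y) = y $ i"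
proof -
  have "det (rowrep (mat 1) i y) =
     det ((\<chi> k. if k = i then sum (\<lambda>j. (y$j) *s axis j 1) UNIV else row k (mat 1)) :: real^'n^'n)"
    unfolding rowrep_def basis_expansion ..
  also have "\<dots> = (\<Sum>j\<in>UNIV. det ((\<chi> k. if k = i then (y$j) *s axis j 1 else row k (mat 1)) :: real^'n^'n))"
    by (rule det_linear_row_sum) simp
  also have "\<dots> = (\<Sum>j\<in>UNIV. y$j * det ((\<chi> k. if k = i then axis j 1 else row k (mat 1)) :: real^'n^'n))"
    by (simp add: det_row_mul)
  also have "\<dots> = (\<Sum>j\<in>UNIV. if j = i then y$j else 0)"
  proof (rule sum.cong)
    fix j assume "j \<in> (UNIV::'n set)"
    show "y$j * det ((\<chi> k. if k = i then axis j 1 else row k (mat 1)) :: real^'n^'n) = (if j = i then y$j else 0)"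
    proof (cases "j = i")
      case True
      have "((\<chi> k. if k = i then axis j 1 else row k (mat 1)) :: real^'n^'n) = mat 1"
        using True by (auto simp: vec_eq_iff row_def mat_def axis_def)
      then show ?thesis using True by simp
    next
      case False
      have "det ((\<chi> k. if k = i then axis j 1 else row k (mat 1)) :: real^'n^'n) = 0"
        by (rule det_identical_rows[OF False[symmetric]]) (use False in \<open>auto simp: vec_eq_iff row_def mat_def axis_def\<close>)
      then show ?thesis using False by simp
    qed
  qed simp
  also have "\<dots> = y$i" by simp
  finally show ?thesis .
qed

lemma rowrep_L1: fixes B :: "real^'n::finite^'n"
  shows "det (rowrep B k (row k B + c *s x)) = det B + c * det (rowrep B k x)"
proof -
  have "det (rowrep B k (row k B + c *s x)) =
    det ((\<chi> i. if i = k then row k B else row i B)::real^'n^'n) + det ((\<chi> i. if i = k then c *s x else row i B)::real^'n^'n)"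
    unfolding rowrep_def by (rule det_row_add)
  also have "(\<chi> i. if i = k then row k B else row i B) = B"
    by (simp add: vec_eq_iff row_def)
  also have "det ((\<chi> i. if i = k then c *s x else row i B)::real^'n^'n) = c * det (rowrep B k x)"
    unfolding rowrep_def by (rule det_row_mul)
  finally show ?thesis .
qed

lemma rowrep_L2: fixes B :: "real^'n::finite^'n"
  assumes "i \<noteq> k" shows "det (rowrep (rowrep B i x) k x) = 0"
  by (rule det_identical_rows[OF assms]) (use assms in \<open>auto simp: rowrep_def row_def vec_eq_iff\<close>)

lemma det_multi:
  fixes A :: "real^'n::finite^'n" and w x :: "real^'n"
  assumes "finite S"
  shows "det (\<chi> i. if i \<in> S then row i A + (w$i) *s x else row i A) = det A + (\<Sum>i\<in>S. w$i * det (rowrep A i x))"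
  using assms
proof (induction S arbitrary: A rule: finite_induct)
  case empty
  have "(\<chi> i. row i A) = A" by (simp add: vec_eq_iff row_def)
  then show ?case by simp
next
  case (insert k S)
  define A' where "A' = rowrep A k (row k A + (w$k) *s x)"
  have a: "(\<chi> i. if i \<in> insert k S then row i A + (w$i) *s x else row i A) =
     (\<chi> i. if i \<in> S then row i A' + (w$i) *s x else row i A')"
    using insert.hyps by (auto simp: vec_eq_iff row_def A'_def rowrep_def)
  have c: "det A' = det A + w$k * det (rowrep A k x)"
    unfolding A'_def by (rule rowrep_L1)
  have d: "det (rowrep A' i x) = det (rowrep A i x)" if "i \<in> S" for i
  proof -
    have ik: "i \<noteq> k" using that insert.hyps by auto
    have "rowrep A' i x = rowrep (rowrep A i x) k (row k (rowrep A i x) + (w$k) *s x)"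
      using ik by (auto simp: vec_eq_iff row_def A'_def rowrep_def)
    then show ?thesis using rowrep_L1[of "rowrep A i x" k "w$k" x] rowrep_L2[OF ik, of A x] by simp
  qed
  show ?case
    unfolding a insert.IH c using d insert.hyps by (simp add: sum.insert)
qed

definition R1 :: "real^'n \<Rightarrow> real^'n \<Rightarrow> real^'n^'n" where
  "R1 u v = (\<chi> i j. u$i * v$j)"

lemma det_rank1: fixes z x :: "real^'n::finite"
  shows "det (mat 1 + R1 z x) = 1 + z \<bullet> x"
proof -
  have "mat 1 + R1 z x = (\<chi> i. if i \<in> UNIV then row i (mat 1) + (z$i) *s x else row i (mat 1))"
    by (simp add: vec_eq_iff row_def R1_def)
  then have "det (mat 1 + R1 z x) = 1 + (\<Sum>i\<in>UNIV. z$i * det (rowrep (mat 1) i x))"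
    using det_multi[of UNIV "mat 1" z x] by simp
  also have "\<dots> = 1 + z \<bullet> x" by (simp add: det_id_row inner_vec_def)
  finally show ?thesis .
qed


lemma matrix_inv_props: fixes A :: "real^'n::finite^'n"
  assumes "invertible A" shows "A ** matrix_inv A = mat 1" "matrix_inv A ** A = mat 1"
proof -
  have "\<exists>A'. A ** A' = mat 1 \<and> A' ** A = mat 1" using assms by (simp add: invertible_def)
  then have "A ** matrix_inv A = mat 1 \<and> matrix_inv A ** A = mat 1"
    unfolding matrix_inv_def by (rule someI_ex)
  then show "A ** matrix_inv A = mat 1" "matrix_inv A ** A = mat 1" by auto
qed

lemma det_update: fixes V :: "real^'n::finite^'n"
  assumes "invertible V"
  shows "det (V + outer x) = det V * (1 + x \<bullet> (matrix_inv V *v x))"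
proof -
  define z where "z = matrix_inv V *v x"
  have Vz: "V *v z = x" unfolding z_def
    by (simp add: matrix_vector_mul_assoc matrix_inv_props(1)[OF assms])
  have "V ** R1 z x = outer x"
  proof -
    have "(V ** R1 z x)$i$j = (V *v z)$i * x$j" for i j
      by (simp add: matrix_matrix_mult_def R1_def matrix_vector_mult_def sum_distrib_right mult.assoc)
    then show ?thesis by (simp add: vec_eq_iff Vz outer_def)
  qed
  then have "V + outer x = V ** (mat 1 + R1 z x)"
    by (simp add: matrix_add_ldistrib)
  then have "det (V + outer x) = det V * (1 + z \<bullet> x)"
    by (simp add: det_mul det_rank1)
  then show ?thesis by (simp add: z_def inner_commute)
qed

definition pd :: "real^'n^'n \<Rightarrow> bool" where
  "pd A \<longleftrightarrow> (\<forall>x. x \<noteq> 0 \<longrightarrow> 0 < x \<bullet> (A *v x))"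

lemma axis_quad: fixes B :: "real^'n::finite^'n"
  shows "axis i 1 \<bullet> (B *v axis i 1) = B$i$i"
  by (simp add: inner_commute[of "axis i 1"] inner_axis matrix_vector_mult_basis column_def)

lemma pd_diag_pos: "pd B \<Longrightarrow> 0 < B$i$i"
  using axis_quad[of i B] unfolding pd_def
  by (metis axis_eq_0_iff one_neq_zero)

lemma E_left: fixes M :: "real^'n::finite^'n"
  shows "((mat 1 - R1 c (axis p 1)) ** M)$i$l = M$i$l - c$i * M$p$l"
proof -
  have "((mat 1 - R1 c (axis p 1)) ** M)$i$l = (\<Sum>k\<in>UNIV. (if k = i then M$k$l else 0) - c$i * (if k = p then M$k$l else 0))"
    unfolding matrix_matrix_mult_def by (simp, rule sum.cong) (auto simp: mat_def R1_def axis_def left_diff_distrib)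
  then show ?thesis by (simp add: sum_subtractf sum_distrib_left[symmetric])
qed

lemma E_right: fixes M :: "real^'n::finite^'n"
  shows "(M ** transpose (mat 1 - R1 c (axis p 1)))$i$j = M$i$j - c$j * M$i$p"
proof -
  have "(M ** transpose (mat 1 - R1 c (axis p 1)))$i$j = (\<Sum>k\<in>UNIV. (if k = j then M$i$k else 0) - c$j * (if k = p then M$i$k else 0))"
    unfolding matrix_matrix_mult_def by (simp, rule sum.cong) (auto simp: transpose_def mat_def R1_def axis_def right_diff_distrib)
  then show ?thesis by (simp add: sum_subtractf sum_distrib_left[symmetric])
qed


lemma pd_congr: fixes B E :: "real^'n::finite^'n"
  assumes "pd B" "det E \<noteq> 0"
  shows "pd (E ** B ** transpose E)"
  unfolding pd_def
proof (intro allI impI)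
  fix x :: "real^'n" assume x: "x \<noteq> 0"
  have inv: "invertible (transpose E)" using assms(2) by (simp add: invertible_det_nz)
  have "transpose E *v x \<noteq> 0"
    using inv x by (metis matrix_left_invertible_ker invertible_left_inverse)
  then have "0 < (transpose E *v x) \<bullet> (B *v (transpose E *v x))"
    using assms(1) unfolding pd_def by blast
  also have "\<dots> = x \<bullet> ((E ** B ** transpose E) *v x)"
    by (metis dot_lmul_matrix matrix_vector_mul_assoc transpose_matrix_vector transpose_transpose)
  finally show "0 < x \<bullet> ((E ** B ** transpose E) *v x)" .
qed


lemma elim_step: fixes B :: "real^'n::finite^'n"
  assumes pdB: "pd B" and sB: "transpose B = B"
  shows "\<exists>B'. pd B' \<and> transpose B' = B' \<and> det B' = det B \<and> (\<forall>i. B'$i$i \<le> B$i$i)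
     \<and> (\<forall>j. j \<noteq> p \<longrightarrow> B'$p$j = 0 \<and> B'$j$p = 0)
     \<and> (\<forall>i j. (\<forall>l. l \<noteq> i \<longrightarrow> B$i$l = 0) \<longrightarrow> j \<noteq> i \<longrightarrow> B'$i$j = 0 \<and> B'$j$i = 0)"
proof -
  have sym: "B$i$j = B$j$i" for i j using sB by (metis transpose_def vec_lambda_beta)
  have Bpp: "0 < B$p$p" by (rule pd_diag_pos[OF pdB])
  define c :: "real^'n" where "c = (\<chi> i. if i = p then 0 else B$i$p / B$p$p)"
  define E where "E = mat 1 - R1 c (axis p 1)"
  define B' where "B' = E ** B ** transpose E"
  have ent: "B'$i$j = B$i$j - c$j * B$i$p - c$i * B$p$j + c$i * c$j * B$p$p" for i j
    unfolding B'_def E_def E_right E_left by (simp add: algebra_simps)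
  have tE: "transpose E = rowrep (mat 1) p (axis p 1 - c)"
    by (simp add: vec_eq_iff E_def transpose_def rowrep_def row_def mat_def R1_def axis_def)
  have dE: "det E = 1"
  proof -
    have "det E = det (transpose E)" by simp
    also have "\<dots> = (axis p 1 - c) $ p" unfolding tE by (rule det_id_row)
    also have "\<dots> = 1" by (simp add: c_def)
    finally show ?thesis .
  qed
  have "pd B'" unfolding B'_def by (rule pd_congr[OF pdB]) (simp add: dE)
  moreover have "transpose B' = B'"
  proof -
    have "B'$j$i = B'$i$j" for i j
      unfolding ent using sym[of i j] sym[of j p] sym[of i p] by (simp add: algebra_simps)
    then show ?thesis by (simp add: vec_eq_iff transpose_def)
  qed
  moreover have "det B' = det B" by (simp add: B'_def det_mul dE)
  moreover have "B'$i$i \<le> B$i$i" for i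
  proof (cases "i = p")
    case True then show ?thesis by (simp add: ent c_def)
  next
    case False
    have "B'$i$i = B$i$i - (B$i$p)^2 / B$p$p"
      using False Bpp by (simp add: ent c_def sym[of p i] field_simps power2_eq_square)
    then show ?thesis using Bpp by simp
  qed
  moreover have "B'$p$j = 0 \<and> B'$j$p = 0" if "j \<noteq> p" for j
    using that Bpp by (simp add: ent c_def sym[of p j] field_simps)
  moreover have "B'$i$j = 0 \<and> B'$j$i = 0" if "\<forall>l. l \<noteq> i \<longrightarrow> B$i$l = 0" "j \<noteq> i" for i j
  proof (cases "i = p")
    case True then show ?thesis using that Bpp by (simp add: ent c_def sym[of p j] field_simps)
  next
    case False
    then have "B$i$p = 0" using that by auto
    then have "c$i = 0" by (simp add: c_def)
    then show ?thesis using that \<open>B$i$p = 0\<close> sym[of p i] sym[of j i] by (simp add: ent)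
  qed
  ultimately show ?thesis by blast
qed


lemma elim_all: fixes A :: "real^'n::finite^'n"
  assumes "pd A" "transpose A = A" "finite P"
  shows "\<exists>B. pd B \<and> transpose B = B \<and> det B = det A \<and> (\<forall>i. B$i$i \<le> A$i$i)
     \<and> (\<forall>i j. i \<in> P \<longrightarrow> j \<noteq> i \<longrightarrow> B$i$j = 0 \<and> B$j$i = 0)"
  using assms(3)
proof (induction P rule: finite_induct)
  case empty
  then show ?case using assms by blast
next
  case (insert p P)
  then obtain B where B: "pd B" "transpose B = B" "det B = det A" "\<forall>i. B$i$i \<le> A$i$i"
     "\<forall>i j. i \<in> P \<longrightarrow> j \<noteq> i \<longrightarrow> B$i$j = 0 \<and> B$j$i = 0" by blast
  obtain B' where B': "pd B'" "transpose B' = B'" "det B' = det B" "\<forall>i. B'$i$i \<le> B$i$i"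
     "\<forall>j. j \<noteq> p \<longrightarrow> B'$p$j = 0 \<and> B'$j$p = 0"
     "\<forall>i j. (\<forall>l. l \<noteq> i \<longrightarrow> B$i$l = 0) \<longrightarrow> j \<noteq> i \<longrightarrow> B'$i$j = 0 \<and> B'$j$i = 0"
    using elim_step[OF B(1,2), of p] by (elim exE conjE) simp
  have Z: "\<forall>i j. i \<in> insert p P \<longrightarrow> j \<noteq> i \<longrightarrow> B'$i$j = 0 \<and> B'$j$i = 0"
  proof (intro allI impI)
    fix i j assume ij: "i \<in> insert p P" "j \<noteq> i"
    show "B'$i$j = 0 \<and> B'$j$i = 0"
    proof (cases "i = p")
      case True then show ?thesis using B'(5) ij(2) by blast
    next
      case False
      then have "i \<in> P" using ij(1) by blast
      then have "\<forall>l. l \<noteq> i \<longrightarrow> B$i$l = 0" using B(5) by blast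
      then show ?thesis using B'(6) ij(2) by blast
    qed
  qed
  have D: "\<forall>i. B'$i$i \<le> A$i$i" using B(4) B'(4) by (meson order_trans)
  have "det B' = det A" using B(3) B'(3) by simp
  then show ?case using B'(1,2) D Z by blast
qed

lemma hadamard: fixes A :: "real^'n::finite^'n"
  assumes "pd A" "transpose A = A"
  shows "0 < det A" "det A \<le> (\<Prod>i\<in>UNIV. A$i$i)"
proof -
  have fU: "finite (UNIV::'n set)" by simp
  obtain B where B: "pd B" "transpose B = B" "det B = det A" "\<forall>i. B$i$i \<le> A$i$i"
     "\<forall>i j. i \<in> UNIV \<longrightarrow> j \<noteq> i \<longrightarrow> B$i$j = 0 \<and> B$j$i = 0"
    using elim_all[OF assms fU] by (elim exE conjE) simp
  have dB: "det B = (\<Prod>i\<in>UNIV. B$i$i)"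
    by (rule det_diagonal) (use B(5) in auto)
  have "0 < (\<Prod>i\<in>UNIV. B$i$i)" by (rule prod_pos) (use pd_diag_pos[OF B(1)] in auto)
  then show "0 < det A" using B(3) dB by simp
  show "det A \<le> (\<Prod>i\<in>UNIV. A$i$i)"
    unfolding B(3)[symmetric] dB
    by (rule prod_mono) (use B(4) pd_diag_pos[OF B(1)] in \<open>auto simp: less_imp_le\<close>)
qed

lemma logdet_bound: fixes A :: "real^'n::finite^'n"
  assumes "pd A" "transpose A = A"
  shows "ln (det A) \<le> real CARD('n) * ln (trace A / real CARD('n))"
proof -
  let ?n = "real CARD('n)"
  have pos: "0 < A$i$i" for i by (rule pd_diag_pos[OF assms(1)])
  have P: "0 < (\<Prod>i\<in>UNIV. A$i$i)" using pos by (simp add: prod_pos)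
  have "ln (det A) \<le> ln (\<Prod>i\<in>UNIV. A$i$i)"
    using hadamard[OF assms] by simp
  also have "\<dots> = ?n * ln ((\<Prod>i\<in>UNIV. A$i$i) powr (1 / ?n))"
    using P by (simp add: ln_powr)
  also have "\<dots> \<le> ?n * ln (\<Sum>i\<in>UNIV. A$i$i / ?n)"
  proof -
    define G where "G = (\<Prod>i\<in>UNIV. A$i$i) powr (1 / ?n)"
    define S where "S = (\<Sum>i\<in>UNIV. A$i$i / ?n)"
    have GS: "G \<le> S"
      unfolding G_def S_def using arith_geom_mean[of "UNIV::'n set" "\<lambda>i. A$i$i"] pos by (simp add: less_imp_le)
    have G0: "0 < G" unfolding G_def using P pos by (simp add: less_imp_neq[symmetric])
    have S0: "0 < S" using G0 GS by linarith
    have "ln G \<le> ln S" using GS G0 S0 by simp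
    then have "?n * ln G \<le> ?n * ln S" by (rule mult_left_mono) simp
    then show ?thesis unfolding G_def S_def .
  qed
  also have "(\<Sum>i\<in>UNIV. A$i$i / ?n) = trace A / ?n"
    by (simp add: trace_def sum_divide_distrib)
  finally show ?thesis .
qed



lemma mv_sum: fixes M :: "'t \<Rightarrow> real^'n::finite^'n"
  assumes "finite S" shows "(sum M S) *v x = (\<Sum>t\<in>S. M t *v x)"
  using assms by (induction S rule: finite_induct) (auto simp: matrix_vector_mult_add_rdistrib)

lemma outer_mv: "outer y *v x = (y \<bullet> x) *\<^sub>R (y::real^'n::finite)"
proof -
  have "(outer y *v x)$i = ((y \<bullet> x) *\<^sub>R y)$i" for i
  proof -
    have "(outer y *v x)$i = (\<Sum>j\<in>UNIV. y$i * y$j * x$j)"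
      by (simp add: outer_def matrix_vector_mult_def)
    also have "\<dots> = (\<Sum>j\<in>UNIV. (y$j * x$j) * y$i)" by (rule sum.cong) auto
    also have "\<dots> = (\<Sum>j\<in>UNIV. y$j * x$j) * y$i" by (rule sum_distrib_right[symmetric])
    also have "\<dots> = ((y \<bullet> x) *\<^sub>R y)$i" by (simp add: inner_vec_def)
    finally show ?thesis .
  qed
  then show ?thesis by (simp add: vec_eq_iff)
qed

lemma quad_Sigma:
  "x \<bullet> (Sigma \<phi> s a h k *v x) = (\<Sum>t\<in>{1..<k}. (\<phi> h (s h t) (a h t) \<bullet> x)^2) + x \<bullet> x"
  unfolding Sigma_def matrix_vector_mult_add_rdistrib mv_sum[OF finite_atLeastLessThan] outer_mv
  by (simp add: inner_sum_right inner_add_right power2_eq_square inner_commute)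

lemma Sigma_entry:
  "(Sigma \<phi> s a h k)$i$j = (\<Sum>t\<in>{1..<k}. \<phi> h (s h t) (a h t) $ i * \<phi> h (s h t) (a h t) $ j) + (if i = j then 1 else 0)"
  by (simp add: Sigma_def outer_def mat_def)

lemma Sigma_sym: "transpose (Sigma \<phi> s a h k) = Sigma \<phi> s a h k"
  by (simp add: vec_eq_iff transpose_def Sigma_entry mult.commute eq_commute)

lemma Sigma_pd: "pd (Sigma \<phi> s a h k)"
  unfolding pd_def quad_Sigma
  by (auto intro!: add_nonneg_pos sum_nonneg)

lemma pd_invertible: fixes A :: "real^'n::finite^'n"
  assumes "pd A" shows "invertible A"
proof -
  have "\<forall>x. A *v x = 0 \<longrightarrow> x = 0" using assms unfolding pd_def by force
  then show ?thesis by (simp add: invertible_left_inverse matrix_left_invertible_ker)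
qed

lemma Sigma_Suc: "1 \<le> k \<Longrightarrow> Sigma \<phi> s a h (Suc k) = Sigma \<phi> s a h k + outer (\<phi> h (s h k) (a h k))"
proof -
  assume "1 \<le> k"
  then have "{1..<Suc k} = insert k {1..<k}" by auto
  then show ?thesis by (simp add: Sigma_def algebra_simps)
qed

lemma Sigma_one: "Sigma \<phi> s a h 1 = mat 1"
  by (simp add: Sigma_def)

lemma trace_Sigma: "trace (Sigma \<phi> s a h k) = (\<Sum>t\<in>{1..<k}. (norm (\<phi> h (s h t) (a h t)))^2) + real CARD('n)"
  for \<phi> :: "nat \<Rightarrow> 's \<Rightarrow> 'a \<Rightarrow> real^'n::finite"
  by (simp add: trace_def Sigma_entry sum.distrib power2_norm_eq_inner inner_vec_def sum.swap[of _ UNIV])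

lemma yk_bounds:
  fixes V :: "real^'n::finite^'n"
  assumes "pd V" "\<And>x. x \<bullet> x \<le> x \<bullet> (V *v x)" "norm X \<le> 1"
  shows "0 \<le> X \<bullet> (matrix_inv V *v X)" "X \<bullet> (matrix_inv V *v X) \<le> 1"
proof -
  define z where "z = matrix_inv V *v X"
  have Vz: "V *v z = X" unfolding z_def
    by (simp add: matrix_vector_mul_assoc matrix_inv_props(1)[OF pd_invertible[OF assms(1)]])
  have y: "X \<bullet> z = z \<bullet> (V *v z)" using Vz by (simp add: inner_commute)
  have zz: "z \<bullet> z \<le> X \<bullet> z" using y assms(2)[of z] by simp
  show "0 \<le> X \<bullet> (matrix_inv V *v X)" using zz z_def by (metis inner_ge_zero order_trans)
  have cs: "X \<bullet> z \<le> norm X * norm z" by (rule norm_cauchy_schwarz)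
  have "norm z ^ 2 \<le> norm X * norm z" using zz cs by (simp add: power2_norm_eq_inner)
  then have "norm z \<le> norm X"
    by (cases "norm z = 0") (auto simp: power2_eq_square)
  then have "norm z \<le> 1" using assms(3) by simp
  then have "norm X * norm z \<le> 1" using assms(3) by (simp add: mult_le_one)
  then show "X \<bullet> (matrix_inv V *v X) \<le> 1" using cs z_def by simp
qed




lemma ln_lower: fixes y :: real assumes "0 \<le> y" "y \<le> 1" shows "y \<le> 2 * ln (1 + y)"
proof -
  have "ln (1 / (1 + y)) \<le> 1 / (1 + y) - 1" using assms by (intro ln_le_minus_one) simp
  then have "y / (1 + y) \<le> ln (1 + y)" using assms by (simp add: ln_div field_simps)
  moreover have "y / 2 \<le> y / (1 + y)" using assms by (intro divide_left_mono) auto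
  ultimately show ?thesis by linarith
qed

theorem lemma8:
  fixes \<phi> :: "nat \<Rightarrow> 's \<Rightarrow> 'a \<Rightarrow> real^'d"
    and s :: "nat \<Rightarrow> nat \<Rightarrow> 's" and a :: "nat \<Rightarrow> nat \<Rightarrow> 'a"
    and dstar dmu :: "nat \<Rightarrow> 's \<Rightarrow> 'a \<Rightarrow> real"
    and H K h :: nat
  assumes phi_bound: "\<And>h x y. norm (\<phi> h x y) \<le> 1"
    and dstar_nonneg: "\<And>h x y. 0 \<le> dstar h x y"
    and dstar_le1: "\<And>h x y. dstar h x y \<le> 1"
    and dmu_nonneg: "\<And>h x y. 0 \<le> dmu h x y"
    and support: "\<And>h x y. h \<in> {1..H} \<Longrightarrow> dstar h x y > 0 \<Longrightarrow> dmu h x y > 0"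
    and kappa_pos: "\<And>h. h \<in> {1..H} \<Longrightarrow> Inf {dmu h x y | x y. dmu h x y > 0} > 0"
    and data_support: "\<And>h k. h \<in> {1..H} \<Longrightarrow> k \<in> {1..K} \<Longrightarrow> dmu h (s h k) (a h k) > 0"
    and hH: "h \<in> {1..H}"
  shows "(\<Sum>k=1..K. dstar h (s h k) (a h k) / dmu h (s h k) (a h k)
            * wnorm (\<phi> h (s h k) (a h k)) (matrix_inv (Sigma \<phi> s a h k)))
         \<le> kappa dmu h * sqrt (2 * real K * real CARD('d) * ln (1 + real K / real CARD('d)))"
proof -
  define X where "X k = \<phi> h (s h k) (a h k)" for k
  define V where "V k = Sigma \<phi> s a h k" for k
  define y where "y k = X k \<bullet> (matrix_inv (V k) *v X k)" for k
  define r where "r k = dstar h (s h k) (a h k) / dmu h (s h k) (a h k)" for k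
  define n where "n = real CARD('d)"
  define \<kappa> where "\<kappa> = kappa dmu h"
  have n0: "0 < n" unfolding n_def by simp
  have quadV: "x \<bullet> x \<le> x \<bullet> (V k *v x)" for k x
    unfolding V_def quad_Sigma by (simp add: sum_nonneg)
  have y0: "0 \<le> y k" and y1: "y k \<le> 1" for k
    using yk_bounds[OF Sigma_pd quadV[unfolded V_def] phi_bound] unfolding y_def X_def V_def by auto
  have detV: "det (V (Suc m)) = (\<Prod>k\<in>{1..m}. 1 + y k)" for m
  proof (induction m)
    case 0
    then show ?case by (simp add: V_def Sigma_def)
  next
    case (Suc m)
    have "V (Suc (Suc m)) = V (Suc m) + outer (X (Suc m))"
      unfolding V_def X_def by (rule Sigma_Suc) simp
    then have "det (V (Suc (Suc m))) = det (V (Suc m)) * (1 + y (Suc m))"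
      unfolding y_def using det_update[OF pd_invertible[OF Sigma_pd]] V_def by simp
    then show ?case using Suc.IH by (simp add: prod.nat_ivl_Suc' mult.commute)
  qed
  have trV: "trace (V (Suc K)) \<le> real K + n"
  proof -
    have "(\<Sum>t\<in>{1..<Suc K}. (norm (X t))^2) \<le> (\<Sum>t\<in>{1..<Suc K}. 1)"
      by (rule sum_mono) (use phi_bound in \<open>auto simp: X_def power_le_one\<close>)
    then show ?thesis unfolding V_def n_def trace_Sigma X_def by simp
  qed
  have trV0: "n \<le> trace (V (Suc K))"
    unfolding V_def n_def trace_Sigma by (simp add: sum_nonneg)
  have ldet: "ln (det (V (Suc K))) \<le> n * ln (1 + real K / n)"
  proof -
    have "ln (det (V (Suc K))) \<le> n * ln (trace (V (Suc K)) / n)"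
      unfolding V_def n_def by (rule logdet_bound[OF Sigma_pd Sigma_sym])
    also have "\<dots> \<le> n * ln ((real K + n) / n)"
    proof -
      have "0 < trace (V (Suc K)) / n" using trV0 n0 by simp
      moreover have "trace (V (Suc K)) / n \<le> (real K + n) / n"
        using trV n0 by (simp add: divide_right_mono)
      ultimately show ?thesis using n0 by (intro mult_left_mono) auto
    qed
    also have "(real K + n) / n = 1 + real K / n" using n0 by (simp add: field_simps)
    finally show ?thesis .
  qed
  have sumy: "(\<Sum>k=1..K. y k) \<le> 2 * n * ln (1 + real K / n)"
  proof -
    have "(\<Sum>k=1..K. y k) \<le> (\<Sum>k=1..K. 2 * ln (1 + y k))"
      by (rule sum_mono) (use y0 y1 ln_lower in auto)
    also have "\<dots> = 2 * ln (\<Prod>k\<in>{1..K}. 1 + y k)"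
      using y0 by (simp add: ln_prod sum_distrib_left add_nonneg_eq_0_iff)
    also have "\<dots> = 2 * ln (det (V (Suc K)))" by (simp add: detV)
    also have "\<dots> \<le> 2 * (n * ln (1 + real K / n))" using ldet by simp
    finally show ?thesis by simp
  qed
  have rk: "0 \<le> r k \<and> r k \<le> \<kappa>" if k: "k \<in> {1..K}" for k
  proof -
    define S where "S = {dmu h x y | x y. dmu h x y > 0}"
    have pos: "0 < dmu h (s h k) (a h k)" using data_support[OF hH k] .
    have inS: "dmu h (s h k) (a h k) \<in> S" using pos unfolding S_def by blast
    have bdd: "bdd_below S" unfolding S_def by (rule bdd_belowI[of _ 0]) auto
    have infle: "Inf S \<le> dmu h (s h k) (a h k)" by (rule cInf_lower[OF inS bdd])
    have inf0: "0 < Inf S" using kappa_pos[OF hH] unfolding S_def .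
    have "r k \<le> 1 / dmu h (s h k) (a h k)"
      unfolding r_def using dstar_le1 pos by (simp add: divide_right_mono)
    also have "\<dots> \<le> 1 / Inf S" using infle inf0 by (simp add: frac_le)
    also have "\<dots> = \<kappa>" unfolding \<kappa>_def kappa_def S_def ..
    finally show ?thesis unfolding r_def using dstar_nonneg pos by (simp add: less_imp_le)
  qed
  have "(\<Sum>k=1..K. r k * wnorm (X k) (matrix_inv (V k))) = (\<Sum>k=1..K. r k * sqrt (y k))"
    by (simp add: wnorm_def y_def)
  also have "\<dots> \<le> (\<Sum>k=1..K. \<kappa> * sqrt (y k))"
  proof (rule sum_mono)
    fix k assume "k \<in> {1..K}"
    then have "r k \<le> \<kappa>" using rk by blast
    then show "r k * sqrt (y k) \<le> \<kappa> * sqrt (y k)" by (rule mult_right_mono) (simp add: y0)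
  qed
  also have "\<dots> = \<kappa> * (\<Sum>k=1..K. sqrt (y k))" by (simp add: sum_distrib_left)
  also have "\<dots> \<le> \<kappa> * sqrt (real K * (2 * n * ln (1 + real K / n)))"
  proof -
    have k0: "0 \<le> \<kappa>"
      unfolding \<kappa>_def kappa_def using kappa_pos[OF hH] by simp
    have "(\<Sum>k=1..K. sqrt (y k))^2 \<le> (\<Sum>k=1..K. (sqrt (y k))^2) * card {1..K}"
      by (rule sum_squared_le_sum_of_squares)
    also have "\<dots> = (\<Sum>k=1..K. y k) * real K" using y0 by simp
    also have "\<dots> \<le> (2 * n * ln (1 + real K / n)) * real K"
      using sumy by (simp add: mult_right_mono)
    finally have "(\<Sum>k=1..K. sqrt (y k)) \<le> sqrt (real K * (2 * n * ln (1 + real K / n)))"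
      by (intro real_le_rsqrt) (simp add: mult.commute)
    then show ?thesis using k0 by (rule mult_left_mono)
  qed
  finally show ?thesis
    unfolding r_def X_def V_def \<kappa>_def n_def by (simp add: mult_ac)
qed

end
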